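(* Let $p$ (true dynamics) and $\hat p$ (learned model) be dynamics kernels, $\pi_D$ and $\pi$ policies, and $k\ge0$ an integer. Suppose $\sup_{s\in\mathcal S} D_{TV}\big(\pi_D(\cdot\mid s),\pi(\cdot\mid s)\big)\le\epsilon_\pi$, and suppose that, for the branched construction with pre-branch pair $(\pi_D,p)$ and post-branch pair $(\pi,p)$ and branch length $k$, for every $t\ge0$ and every $i$ with $m_t\le i<t$, $$\mathbb E_{s\sim \nu_{t,i},\,a\sim\pi(\cdot\mid s)}\Big[D_{TV}\big(p(\cdot\mid s,a),\hat p(\cdot\mid s,a)\big)\Big]\le\epsilon_{m'},$$ where $\nu_{t,i}$ is the law of $s_i$ in that construction. Let $\eta[\pi]=\eta(\pi,p)$ and $\eta^{\mathrm{branch}}[\pi]=\eta_k(\pi_D,p;\pi,\hat p)$. Then $$\eta[\pi]\ \ge\ \eta^{\mathrm{branch}}[\pi]-2r_{\max}\left[\frac{\gamma^{k+1}\epsilon_\pi}{(1-\gamma)^2}+\frac{\gamma^{k}\epsilon_\pi}{1-\gamma}+\frac{k}{1-\gamma}\,\epsilon_{m'}\right].$$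
   Context: Let $\mathcal S$ and $\mathcal A$ be countable (e.g. finite) state and action spaces, $\rho_0$ a probability distribution on $\mathcal S$ (initial state distribution), $\gamma\in(0,1)$ a discount factor, and $r:\mathcal S\times\mathcal A\to\mathbb R$ a reward function with $|r(s,a)|\le r_{\max}$ for all $(s,a)$. A policy is a Markov kernel $\pi(a\mid s)$ from $\mathcal S$ to $\mathcal A$; a dynamics kernel is a Markov kernel $q(s'\mid s,a)$ from $\mathcal S\times\mathcal A$ to $\mathcal S$. For a policy $\pi$ and dynamics $q$, the return is $\eta(\pi,q)=\sum_{t\ge0}\gamma^t\,\mathbb E[r(s_t,a_t)]$, where $s_0\sim\rho_0$, $a_t\sim\pi(\cdot\mid s_t)$, $s_{t+1}\sim q(\cdot\mid s_t,a_t)$. For probability distributions $\mu,\nu$ on a countable set, $D_{TV}(\mu,\nu)=\frac12\sum_x|\mu(x)-\nu(x)|$. Branched return: given a "pre-branch" pair (policy $\pi^{\mathrm{pre}}$, dynamics $q^{\mathrm{pre}}$), a "post-branch" pair (policy $\pi^{\mathrm{post}}$, dynamics $q^{\mathrm{post}}$) and an integer $k\ge0$, for each $t\ge0$ let $m_t=\max(t-k,0)$ and generate $s_0\sim\rho_0$; for $0\le i<m_t$: $a_i\sim\pi^{\mathrm{pre}}(\cdot\mid s_i)$, $s_{i+1}\sim q^{\mathrm{pre}}(\cdot\mid s_i,a_i)$; for $m_t\le i<t$: $a_i\sim\pi^{\mathrm{post}}(\cdot\mid s_i)$, $s_{i+1}\sim q^{\mathrm{post}}(\cdot\mid s_i,a_i)$;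 finally $a_t\sim\pi^{\mathrm{post}}(\cdot\mid s_t)$. Let $d_t$ be the law of $(s_t,a_t)$ so produced. The $k$-branched return is $\eta_k(\pi^{\mathrm{pre}},q^{\mathrm{pre}};\pi^{\mathrm{post}},q^{\mathrm{post}})=\sum_{t\ge0}\gamma^t\,\mathbb E_{(s,a)\sim d_t}[r(s,a)]$. (Thus the state at time $t$ is obtained by following the pre-branch pair up to time $t-k$ and then the post-branch pair for the remaining at most $k$ steps; note $\eta_k(\pi,q;\pi,q)=\eta(\pi,q)$.) *)

theory Defs
  imports "HOL-Probability.Probability"
begin

definition dTV :: "'x pmf \<Rightarrow> 'x pmf \<Rightarrow> real" where
  "dTV \<mu> \<nu> = (1/2) * infsum (\<lambda>x. \<bar>pmf \<mu> x - pmf \<nu> x\<bar>) UNIV"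

definition step :: "('s \<Rightarrow> 'a pmf) \<Rightarrow> ('s \<Rightarrow> 'a \<Rightarrow> 's pmf) \<Rightarrow> 's pmf \<Rightarrow> 's pmf" where
  "step pol q \<mu> = \<mu> \<bind> (\<lambda>s. pol s \<bind> (\<lambda>a. q s a))"

text \<open>Law nu_{t,i} of s_i in the branched construction for time t (m_t = t - k, truncated).\<close>
definition branch_state ::
  "'s pmf \<Rightarrow> nat \<Rightarrow> ('s \<Rightarrow> 'a pmf) \<Rightarrow> ('s \<Rightarrow> 'a \<Rightarrow> 's pmf) \<Rightarrow>
   ('s \<Rightarrow> 'a pmf) \<Rightarrow> ('s \<Rightarrow> 'a \<Rightarrow> 's pmf) \<Rightarrow> nat \<Rightarrow> nat \<Rightarrow> 's pmf" where
  "branch_state \<rho>0 k pre qpre post qpost t i =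
     (if i \<le> t - k then (step pre qpre ^^ i) \<rho>0
      else (step post qpost ^^ (i - (t - k))) ((step pre qpre ^^ (t - k)) \<rho>0))"

definition branch_sa ::
  "'s pmf \<Rightarrow> nat \<Rightarrow> ('s \<Rightarrow> 'a pmf) \<Rightarrow> ('s \<Rightarrow> 'a \<Rightarrow> 's pmf) \<Rightarrow>
   ('s \<Rightarrow> 'a pmf) \<Rightarrow> ('s \<Rightarrow> 'a \<Rightarrow> 's pmf) \<Rightarrow> nat \<Rightarrow> ('s \<times> 'a) pmf" where
  "branch_sa \<rho>0 k pre qpre post qpost t =
     branch_state \<rho>0 k pre qpre post qpost t t \<bind> (\<lambda>s. map_pmf (\<lambda>a. (s, a)) (post s))"

definition branched_return ::
  "'s pmf \<Rightarrow> real \<Rightarrow> ('s \<Rightarrow> 'a \<Rightarrow> real) \<Rightarrow> nat \<Rightarrow> ('s \<Rightarrow> 'a pmf) \<Rightarrow> ('s \<Rightarrow> 'a \<Rightarrow> 's pmf) \<Rightarrow>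
   ('s \<Rightarrow> 'a pmf) \<Rightarrow> ('s \<Rightarrow> 'a \<Rightarrow> 's pmf) \<Rightarrow> real" where
  "branched_return \<rho>0 \<gamma> r k pre qpre post qpost =
     (\<Sum>t. \<gamma> ^ t * measure_pmf.expectation (branch_sa \<rho>0 k pre qpre post qpost t) (\<lambda>(s, a). r s a))"

definition state_law :: "'s pmf \<Rightarrow> ('s \<Rightarrow> 'a pmf) \<Rightarrow> ('s \<Rightarrow> 'a \<Rightarrow> 's pmf) \<Rightarrow> nat \<Rightarrow> 's pmf" where
  "state_law \<rho>0 pol q t = (step pol q ^^ t) \<rho>0"

definition return :: "'s pmf \<Rightarrow> real \<Rightarrow> ('s \<Rightarrow> 'a \<Rightarrow> real) \<Rightarrow> ('s \<Rightarrow> 'a pmf) \<Rightarrow> ('s \<Rightarrow> 'a \<Rightarrow> 's pmf) \<Rightarrow> real" where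
  "return \<rho>0 \<gamma> r pol q =
     (\<Sum>t. \<gamma> ^ t * measure_pmf.expectation
        (state_law \<rho>0 pol q t \<bind> (\<lambda>s. map_pmf (\<lambda>a. (s, a)) (pol s))) (\<lambda>(s, a). r s a))"

end

theory Submission
  imports Defs
begin

no_notation Infinite_Sum.abs_summable_on (infixr \<open>abs'_summable'_on\<close> 46)

lemma exp_diff_le:
  fixes \<mu> \<nu> :: "'x pmf" and f :: "'x \<Rightarrow> real"
  assumes "\<And>x. \<bar>f x\<bar> \<le> B"
  shows "\<bar>measure_pmf.expectation \<mu> f - measure_pmf.expectation \<nu> f\<bar> \<le> B * (2 * dTV \<mu> \<nu>)"
proof -
  have B0: "0 \<le> B" using assms[of undefined] by simp
  have s1: "(\<lambda>x. pmf \<mu> x * f x) abs_summable_on UNIV"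
    by (rule abs_summable_on_comparison_test'[where g="\<lambda>x. B * pmf \<mu> x"])
       (use assms B0 in \<open>auto simp: abs_mult mult.commute[of B] intro!: mult_left_mono\<close>)
  have s2: "(\<lambda>x. pmf \<nu> x * f x) abs_summable_on UNIV"
    by (rule abs_summable_on_comparison_test'[where g="\<lambda>x. B * pmf \<nu> x"])
       (use assms B0 in \<open>auto simp: abs_mult mult.commute[of B] intro!: mult_left_mono\<close>)
  have sd: "(\<lambda>x. \<bar>pmf \<mu> x - pmf \<nu> x\<bar>) abs_summable_on UNIV"
    by (rule abs_summable_on_comparison_test'[where g="\<lambda>x. pmf \<mu> x + pmf \<nu> x"]) (auto simp: abs_le_iff intro: add_increasing add_increasing2)
  have "measure_pmf.expectation \<mu> f - measure_pmf.expectation \<nu> f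
      = infsetsum (\<lambda>x. pmf \<mu> x * f x - pmf \<nu> x * f x) UNIV"
    by (simp add: pmf_expectation_eq_infsetsum infsetsum_diff[OF s1 s2])
  also have "\<bar>\<dots>\<bar> \<le> infsetsum (\<lambda>x. \<bar>pmf \<mu> x * f x - pmf \<nu> x * f x\<bar>) UNIV"
    using norm_infsetsum_bound[of "\<lambda>x. pmf \<mu> x * f x - pmf \<nu> x * f x" UNIV] by simp
  also have "\<dots> \<le> infsetsum (\<lambda>x. B * \<bar>pmf \<mu> x - pmf \<nu> x\<bar>) UNIV"
  proof (rule infsetsum_mono)
    show "(\<lambda>x. \<bar>pmf \<mu> x * f x - pmf \<nu> x * f x\<bar>) abs_summable_on UNIV"
      using abs_summable_on_diff[OF s1 s2] by (simp add: abs_summable_on_def)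
    show "(\<lambda>x. B * \<bar>pmf \<mu> x - pmf \<nu> x\<bar>) abs_summable_on UNIV"
      using sd by auto
    fix x
    have "\<bar>pmf \<mu> x * f x - pmf \<nu> x * f x\<bar> = \<bar>pmf \<mu> x - pmf \<nu> x\<bar> * \<bar>f x\<bar>"
      by (simp add: left_diff_distrib[symmetric] abs_mult)
    also have "\<dots> \<le> \<bar>pmf \<mu> x - pmf \<nu> x\<bar> * B" by (rule mult_left_mono) (use assms in auto)
    finally show "\<bar>pmf \<mu> x * f x - pmf \<nu> x * f x\<bar> \<le> B * \<bar>pmf \<mu> x - pmf \<nu> x\<bar>" by (simp add: mult.commute)
  qed
  also have "\<dots> = B * infsetsum (\<lambda>x. \<bar>pmf \<mu> x - pmf \<nu> x\<bar>) UNIV"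
    by (rule infsetsum_cmult_right) (use sd in auto)
  also have "infsetsum (\<lambda>x. \<bar>pmf \<mu> x - pmf \<nu> x\<bar>) UNIV = 2 * dTV \<mu> \<nu>"
    unfolding dTV_def using infsetsum_infsum[OF sd] by simp
  finally show ?thesis .
qed

lemma dTV_nonneg: "0 \<le> dTV \<mu> \<nu>"
  unfolding dTV_def by (auto intro!: infsum_nonneg)


lemma exp_bind:
  fixes f :: "'b \<Rightarrow> real"
  assumes "\<And>x. \<bar>f x\<bar> \<le> B"
  shows "measure_pmf.expectation (bind_pmf \<mu> K) f = measure_pmf.expectation \<mu> (\<lambda>s. measure_pmf.expectation (K s) f)"
  unfolding measure_pmf_bind
  by (rule integral_bind[where K="count_space UNIV" and B=B and B'=1])
     (auto simp: assms space_subprob_algebra prob_space_imp_subprob_space measure_pmf.prob_space_axioms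
        intro!: prob_space_imp_subprob_space measure_pmf.finite_measure_axioms AE_pmfI)

lemma exp_abs_bound:
  fixes f :: "'b \<Rightarrow> real"
  assumes "\<And>x. \<bar>f x\<bar> \<le> B"
  shows "\<bar>measure_pmf.expectation \<mu> f\<bar> \<le> B"
proof -
  have "\<bar>measure_pmf.expectation \<mu> f\<bar> \<le> measure_pmf.expectation \<mu> (\<lambda>x. \<bar>f x\<bar>)"
    by (rule integral_abs_bound)
  also have "\<dots> \<le> measure_pmf.expectation \<mu> (\<lambda>x. B)"
    by (rule integral_mono) (auto simp: assms intro!: measure_pmf.integrable_const_bound[where B=B] AE_pmfI)
  finally show ?thesis by simp
qed

definition tvc :: "'x pmf \<Rightarrow> 'x pmf \<Rightarrow> real \<Rightarrow> bool" where
  "tvc \<mu> \<nu> c \<longleftrightarrow> (\<forall>(f::'x \<Rightarrow> real) B. (\<forall>x. \<bar>f x\<bar> \<le> B) \<longrightarrow>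
      \<bar>measure_pmf.expectation \<mu> f - measure_pmf.expectation \<nu> f\<bar> \<le> B * c)"

lemma tvcD: "tvc \<mu> \<nu> c \<Longrightarrow> (\<And>x. \<bar>f x\<bar> \<le> B) \<Longrightarrow>
      \<bar>measure_pmf.expectation \<mu> f - measure_pmf.expectation \<nu> f\<bar> \<le> B * c"
  unfolding tvc_def by blast

lemma tvc_dTV: "tvc \<mu> \<nu> (2 * dTV \<mu> \<nu>)"
  unfolding tvc_def using exp_diff_le by blast

lemma tvc_refl: "tvc \<mu> \<mu> 0"
  unfolding tvc_def by simp

lemma tvc_trans: "tvc \<mu> \<nu> c1 \<Longrightarrow> tvc \<nu> \<rho> c2 \<Longrightarrow> tvc \<mu> \<rho> (c1 + c2)"
  unfolding tvc_def
proof (intro allI impI)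
  fix f :: "'a \<Rightarrow> real" and B
  assume a: "\<forall>f B. (\<forall>x. \<bar>f x\<bar> \<le> B) \<longrightarrow> \<bar>measure_pmf.expectation \<mu> f - measure_pmf.expectation \<nu> f\<bar> \<le> B * c1"
    and b: "\<forall>f B. (\<forall>x. \<bar>f x\<bar> \<le> B) \<longrightarrow> \<bar>measure_pmf.expectation \<nu> f - measure_pmf.expectation \<rho> f\<bar> \<le> B * c2"
    and f: "\<forall>x. \<bar>f x\<bar> \<le> B"
  from a f b show "\<bar>measure_pmf.expectation \<mu> f - measure_pmf.expectation \<rho> f\<bar> \<le> B * (c1 + c2)"
    by (smt (verit, best) distrib_left)
qed

lemma tvc_mono: "tvc \<mu> \<nu> c \<Longrightarrow> c \<le> c' \<Longrightarrow> tvc \<mu> \<nu> c'"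
  unfolding tvc_def
proof (intro allI impI)
  fix f :: "'a \<Rightarrow> real" and B
  assume a: "\<forall>f B. (\<forall>x. \<bar>f x\<bar> \<le> B) \<longrightarrow> \<bar>measure_pmf.expectation \<mu> f - measure_pmf.expectation \<nu> f\<bar> \<le> B * c"
    and c: "c \<le> c'" and f: "\<forall>x. \<bar>f x\<bar> \<le> B"
  have "0 \<le> B" using f by (meson abs_ge_zero order_trans)
  hence "B * c \<le> B * c'" using c by (simp add: mult_left_mono)
  moreover have "\<bar>measure_pmf.expectation \<mu> f - measure_pmf.expectation \<nu> f\<bar> \<le> B * c"
    using a f by blast
  ultimately show "\<bar>measure_pmf.expectation \<mu> f - measure_pmf.expectation \<nu> f\<bar> \<le> B * c'"
    by linarith
qed

lemma tvc_bind_same: "tvc \<mu> \<nu> c \<Longrightarrow> tvc (bind_pmf \<mu> K) (bind_pmf \<nu> K) c"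
  unfolding tvc_def
proof (intro allI impI)
  fix f :: "'b \<Rightarrow> real" and B
  assume a: "\<forall>f B. (\<forall>x. \<bar>f x\<bar> \<le> B) \<longrightarrow> \<bar>measure_pmf.expectation \<mu> f - measure_pmf.expectation \<nu> f\<bar> \<le> B * c"
    and f: "\<forall>x. \<bar>f x\<bar> \<le> B"
  have g: "\<forall>s. \<bar>measure_pmf.expectation (K s) f\<bar> \<le> B"
    using f exp_abs_bound by blast
  show "\<bar>measure_pmf.expectation (bind_pmf \<mu> K) f - measure_pmf.expectation (bind_pmf \<nu> K) f\<bar> \<le> B * c"
    using a g f by (simp add: exp_bind[where B=B])
qed

lemma tvc_bind_kernel:
  assumes "\<And>s. tvc (K s) (L s) (c s)" and "\<And>s. \<bar>c s\<bar> \<le> C"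
  shows "tvc (bind_pmf \<mu> K) (bind_pmf \<mu> L) (measure_pmf.expectation \<mu> c)"
  unfolding tvc_def
proof (intro allI impI)
  fix f :: "'b \<Rightarrow> real" and B
  assume f: "\<forall>x. \<bar>f x\<bar> \<le> B"
  have B0: "0 \<le> B" using f by (meson abs_ge_zero order_trans)
  have gK: "\<And>s. \<bar>measure_pmf.expectation (K s) f\<bar> \<le> B" and gL: "\<And>s. \<bar>measure_pmf.expectation (L s) f\<bar> \<le> B"
    using f exp_abs_bound by blast+
  have iK: "integrable \<mu> (\<lambda>s. measure_pmf.expectation (K s) f)"
    by (rule measure_pmf.integrable_const_bound[where B=B]) (use gK in auto)
  have iL: "integrable \<mu> (\<lambda>s. measure_pmf.expectation (L s) f)"
    by (rule measure_pmf.integrable_const_bound[where B=B]) (use gL in auto)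
  have ic: "integrable \<mu> c"
    by (rule measure_pmf.integrable_const_bound[where B=C]) (use assms(2) in auto)
  have "measure_pmf.expectation (bind_pmf \<mu> K) f - measure_pmf.expectation (bind_pmf \<mu> L) f
      = measure_pmf.expectation \<mu> (\<lambda>s. measure_pmf.expectation (K s) f - measure_pmf.expectation (L s) f)"
    using f by (simp add: exp_bind[where B=B] Bochner_Integration.integral_diff[OF iK iL])
  also have "\<bar>\<dots>\<bar> \<le> measure_pmf.expectation \<mu> (\<lambda>s. \<bar>measure_pmf.expectation (K s) f - measure_pmf.expectation (L s) f\<bar>)"
    by (rule integral_abs_bound)
  also have "\<dots> \<le> measure_pmf.expectation \<mu> (\<lambda>s. B * c s)"
    by (rule integral_mono) (use iK iL ic f in \<open>auto intro!: tvcD[OF assms(1)]\<close>)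
  also have "\<dots> = B * measure_pmf.expectation \<mu> c" by simp
  finally show "\<bar>measure_pmf.expectation (bind_pmf \<mu> K) f - measure_pmf.expectation (bind_pmf \<mu> L) f\<bar>
      \<le> B * measure_pmf.expectation \<mu> c" .
qed

lemma dTV_le1: "dTV \<mu> \<nu> \<le> 1"
proof -
  have sd: "(\<lambda>x. \<bar>pmf \<mu> x - pmf \<nu> x\<bar>) abs_summable_on UNIV"
    by (rule abs_summable_on_comparison_test'[where g="\<lambda>x. pmf \<mu> x + pmf \<nu> x"]) (auto simp: abs_le_iff intro: add_increasing add_increasing2)
  have "infsetsum (\<lambda>x. \<bar>pmf \<mu> x - pmf \<nu> x\<bar>) UNIV \<le> infsetsum (\<lambda>x. pmf \<mu> x + pmf \<nu> x) UNIV"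
    by (rule infsetsum_mono) (use sd in \<open>auto simp: abs_le_iff intro: add_increasing add_increasing2\<close>)
  also have "\<dots> = 2" by (subst infsetsum_add) (auto simp: infsetsum_pmf_eq_1)
  finally show ?thesis unfolding dTV_def using infsetsum_infsum[OF sd] by simp
qed

lemma tvc_sym: "tvc \<mu> \<nu> c \<Longrightarrow> tvc \<nu> \<mu> c"
  unfolding tvc_def by (simp add: abs_minus_commute)

lemma step_same: "tvc \<mu> \<nu> c \<Longrightarrow> tvc (step pol q \<mu>) (step pol q \<nu>) c"
  unfolding step_def by (rule tvc_bind_same)

lemma funpow_same: "tvc \<mu> \<nu> c \<Longrightarrow> tvc ((step pol q ^^ n) \<mu>) ((step pol q ^^ n) \<nu>) c"
  by (induction n) (auto intro: step_same)

lemma step_policy: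
  assumes "\<forall>s. dTV (\<pi>D s) (\<pi> s) \<le> \<epsilon>"
  shows "tvc (step \<pi> q \<mu>) (step \<pi>D q \<mu>) (2 * \<epsilon>)"
proof -
  have "\<And>s. tvc (bind_pmf (\<pi> s) (q s)) (bind_pmf (\<pi>D s) (q s)) (2 * \<epsilon>)"
  proof -
    fix s
    have "tvc (\<pi> s) (\<pi>D s) (2 * dTV (\<pi>D s) (\<pi> s))"
      by (rule tvc_sym, rule tvc_dTV)
    hence "tvc (\<pi> s) (\<pi>D s) (2 * \<epsilon>)" by (rule tvc_mono) (use assms in auto)
    thus "tvc (bind_pmf (\<pi> s) (q s)) (bind_pmf (\<pi>D s) (q s)) (2 * \<epsilon>)" by (rule tvc_bind_same)
  qed
  hence "tvc (bind_pmf \<mu> (\<lambda>s. bind_pmf (\<pi> s) (q s))) (bind_pmf \<mu> (\<lambda>s. bind_pmf (\<pi>D s) (q s)))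
           (measure_pmf.expectation \<mu> (\<lambda>s. 2 * \<epsilon>))"
    by (rule tvc_bind_kernel[where C="\<bar>2*\<epsilon>\<bar>"]) auto
  thus ?thesis unfolding step_def by simp
qed

lemma policy_iter:
  assumes "\<forall>s. dTV (\<pi>D s) (\<pi> s) \<le> \<epsilon>"
  shows "tvc ((step \<pi> q ^^ m) \<mu>) ((step \<pi>D q ^^ m) \<mu>) (2 * real m * \<epsilon>)"
proof (induction m)
  case 0 show ?case by (simp add: tvc_refl)
next
  case (Suc m)
  have "tvc (step \<pi> q ((step \<pi> q ^^ m) \<mu>)) (step \<pi> q ((step \<pi>D q ^^ m) \<mu>)) (2 * real m * \<epsilon>)"
    by (rule step_same[OF Suc])
  moreover have "tvc (step \<pi> q ((step \<pi>D q ^^ m) \<mu>)) (step \<pi>D q ((step \<pi>D q ^^ m) \<mu>)) (2 * \<epsilon>)"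
    by (rule step_policy[OF assms])
  ultimately have "tvc (step \<pi> q ((step \<pi> q ^^ m) \<mu>)) (step \<pi>D q ((step \<pi>D q ^^ m) \<mu>)) (2 * real m * \<epsilon> + 2 * \<epsilon>)"
    by (rule tvc_trans)
  thus ?case by (simp add: algebra_simps)
qed

definition merr :: "('s \<Rightarrow> 'a pmf) \<Rightarrow> ('s \<Rightarrow> 'a \<Rightarrow> 's pmf) \<Rightarrow> ('s \<Rightarrow> 'a \<Rightarrow> 's pmf) \<Rightarrow> 's \<Rightarrow> real" where
  "merr \<pi> p phat s = measure_pmf.expectation (\<pi> s) (\<lambda>a. dTV (p s a) (phat s a))"

lemma merr_bound: "\<bar>merr \<pi> p phat s\<bar> \<le> 1"
  unfolding merr_def by (rule exp_abs_bound) (metis abs_of_nonneg dTV_nonneg dTV_le1)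

lemma step_model:
  "tvc (step \<pi> p \<mu>) (step \<pi> phat \<mu>) (2 * measure_pmf.expectation \<mu> (merr \<pi> p phat))"
proof -
  have "\<And>s. tvc (bind_pmf (\<pi> s) (p s)) (bind_pmf (\<pi> s) (phat s)) (measure_pmf.expectation (\<pi> s) (\<lambda>a. 2 * dTV (p s a) (phat s a)))"
    by (rule tvc_bind_kernel[where C=2]) (auto intro: tvc_dTV simp: dTV_nonneg dTV_le1)
  hence "\<And>s. tvc (bind_pmf (\<pi> s) (p s)) (bind_pmf (\<pi> s) (phat s)) (2 * merr \<pi> p phat s)"
    by (simp add: merr_def)
  hence "tvc (bind_pmf \<mu> (\<lambda>s. bind_pmf (\<pi> s) (p s))) (bind_pmf \<mu> (\<lambda>s. bind_pmf (\<pi> s) (phat s)))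
           (measure_pmf.expectation \<mu> (\<lambda>s. 2 * merr \<pi> p phat s))"
    by (rule tvc_bind_kernel[where C=2]) (use merr_bound in \<open>auto simp: abs_mult\<close>)
  thus ?thesis unfolding step_def by simp
qed

lemma model_iter:
  "tvc ((step \<pi> p ^^ n) \<nu>) ((step \<pi> phat ^^ n) \<nu>)
     (2 * (\<Sum>i<n. measure_pmf.expectation ((step \<pi> p ^^ i) \<nu>) (merr \<pi> p phat)))"
proof (induction n)
  case 0 show ?case by (simp add: tvc_refl)
next
  case (Suc n)
  have "tvc (step \<pi> p ((step \<pi> p ^^ n) \<nu>)) (step \<pi> phat ((step \<pi> p ^^ n) \<nu>))
          (2 * measure_pmf.expectation ((step \<pi> p ^^ n) \<nu>) (merr \<pi> p phat))"
    by (rule step_model)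
  moreover have "tvc (step \<pi> phat ((step \<pi> p ^^ n) \<nu>)) (step \<pi> phat ((step \<pi> phat ^^ n) \<nu>))
     (2 * (\<Sum>i<n. measure_pmf.expectation ((step \<pi> p ^^ i) \<nu>) (merr \<pi> p phat)))"
    by (rule step_same[OF Suc])
  ultimately have "tvc (step \<pi> p ((step \<pi> p ^^ n) \<nu>)) (step \<pi> phat ((step \<pi> phat ^^ n) \<nu>))
     (2 * measure_pmf.expectation ((step \<pi> p ^^ n) \<nu>) (merr \<pi> p phat) + 2 * (\<Sum>i<n. measure_pmf.expectation ((step \<pi> p ^^ i) \<nu>) (merr \<pi> p phat)))"
    by (rule tvc_trans)
  thus ?case by (simp add: algebra_simps)
qed

lemma sum_shift_geom:
  fixes \<gamma> :: real
  assumes "0 \<le> \<gamma>" "\<gamma> < 1"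
  shows "(\<lambda>t. \<gamma> ^ t * real (t - k)) sums (\<gamma> ^ (k + 1) / (1 - \<gamma>)^2)"
proof -
  have "(\<lambda>n. of_nat (Suc n) * \<gamma> ^ n) sums (1 / (1 - \<gamma>)^2)"
    by (rule geometric_deriv_sums) (use assms in auto)
  hence "(\<lambda>n. \<gamma> * (of_nat (Suc n) * \<gamma> ^ n)) sums (\<gamma> * (1 / (1 - \<gamma>)^2))"
    by (rule sums_mult)
  hence "(\<lambda>n. real (Suc n) * \<gamma> ^ (Suc n)) sums (\<gamma> / (1 - \<gamma>)^2)"
    by (simp add: algebra_simps)
  hence g: "(\<lambda>n. real n * \<gamma> ^ n) sums (\<gamma> / (1 - \<gamma>)^2)"
    by (subst (asm) sums_Suc_iff) simp
  hence "(\<lambda>n. \<gamma> ^ k * (real n * \<gamma> ^ n)) sums (\<gamma> ^ k * (\<gamma> / (1 - \<gamma>)^2))"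
    by (rule sums_mult)
  hence "(\<lambda>i. \<gamma> ^ (i + k) * real (i + k - k)) sums (\<gamma> ^ (k + 1) / (1 - \<gamma>)^2)"
    by (simp add: power_add algebra_simps)
  hence "(\<lambda>t. \<gamma> ^ t * real (t - k)) sums (\<gamma> ^ (k + 1) / (1 - \<gamma>)^2 + (\<Sum>i<k. \<gamma> ^ i * real (i - k)))"
    by (subst (asm) sums_iff_shift)
  moreover have "(\<Sum>i<k. \<gamma> ^ i * real (i - k)) = 0" by simp
  ultimately show ?thesis by simp
qed

lemma per_t:
  fixes \<rho>0 :: "'s pmf" and p phat :: "'s \<Rightarrow> 'a \<Rightarrow> 's pmf" and \<pi>D \<pi> :: "'s \<Rightarrow> 'a pmf"
  assumes pol: "\<forall>s. dTV (\<pi>D s) (\<pi> s) \<le> \<epsilon>\<pi>"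
    and mod: "\<forall>t i. t - k \<le> i \<and> i < t \<longrightarrow>
           measure_pmf.expectation (branch_state \<rho>0 k \<pi>D p \<pi> p t i)
             (\<lambda>s. measure_pmf.expectation (\<pi> s) (\<lambda>a. dTV (p s a) (phat s a))) \<le> \<epsilon>m"
    and em: "k = 0 \<or> 0 \<le> \<epsilon>m"
  shows "tvc (state_law \<rho>0 \<pi> p t) (branch_state \<rho>0 k \<pi>D p \<pi> phat t t)
           (2 * real (t - k) * \<epsilon>\<pi> + 2 * real k * \<epsilon>m)"
proof -
  define m where "m = t - k"
  define n where "n = t - m"
  define \<nu> where "\<nu> = (step \<pi>D p ^^ m) \<rho>0"
  have tnm: "t = n + m" unfolding n_def m_def by simp
  have eq1: "state_law \<rho>0 \<pi> p t = (step \<pi> p ^^ n) ((step \<pi> p ^^ m) \<rho>0)"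
    unfolding state_law_def tnm by (simp add: funpow_add)
  have eq2: "branch_state \<rho>0 k \<pi>D p \<pi> phat t t = (step \<pi> phat ^^ n) \<nu>"
  proof (cases "t \<le> t - k")
    case True
    then have "t - k = t" by simp
    then show ?thesis unfolding branch_state_def \<nu>_def n_def m_def by simp
  next
    case False
    then show ?thesis unfolding branch_state_def \<nu>_def n_def m_def by simp
  qed
  have A: "tvc ((step \<pi> p ^^ n) ((step \<pi> p ^^ m) \<rho>0)) ((step \<pi> p ^^ n) \<nu>) (2 * real m * \<epsilon>\<pi>)"
    unfolding \<nu>_def by (rule funpow_same[OF policy_iter[OF pol]])
  have B: "tvc ((step \<pi> p ^^ n) \<nu>) ((step \<pi> phat ^^ n) \<nu>)
     (2 * (\<Sum>i<n. measure_pmf.expectation ((step \<pi> p ^^ i) \<nu>) (merr \<pi> p phat)))"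
    by (rule model_iter)
  have me: "merr \<pi> p phat = (\<lambda>s. measure_pmf.expectation (\<pi> s) (\<lambda>a. dTV (p s a) (phat s a)))"
    by (rule ext) (simp add: merr_def)
  have each: "measure_pmf.expectation ((step \<pi> p ^^ i) \<nu>) (merr \<pi> p phat) \<le> \<epsilon>m" if "i < n" for i
  proof -
    have bs: "branch_state \<rho>0 k \<pi>D p \<pi> p t (m + i) = (step \<pi> p ^^ i) \<nu>"
      unfolding branch_state_def \<nu>_def m_def by auto
    have "t - k \<le> m + i \<and> m + i < t" using that unfolding n_def m_def by auto
    with mod have "measure_pmf.expectation (branch_state \<rho>0 k \<pi>D p \<pi> p t (m + i))
             (\<lambda>s. measure_pmf.expectation (\<pi> s) (\<lambda>a. dTV (p s a) (phat s a))) \<le> \<epsilon>m" by blast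
    thus ?thesis unfolding bs me .
  qed
  have "(\<Sum>i<n. measure_pmf.expectation ((step \<pi> p ^^ i) \<nu>) (merr \<pi> p phat)) \<le> (\<Sum>i<n. \<epsilon>m)"
    by (rule sum_mono) (use each in auto)
  also have "\<dots> = real n * \<epsilon>m" by simp
  also have "\<dots> \<le> real k * \<epsilon>m"
  proof (cases "k = 0")
    case True then show ?thesis unfolding n_def m_def by simp
  next
    case False
    then have "0 \<le> \<epsilon>m" using em by simp
    moreover have "n \<le> k" unfolding n_def m_def by simp
    ultimately show ?thesis by (simp add: mult_right_mono)
  qed
  finally have sb: "(\<Sum>i<n. measure_pmf.expectation ((step \<pi> p ^^ i) \<nu>) (merr \<pi> p phat)) \<le> real k * \<epsilon>m" .
  have "tvc ((step \<pi> p ^^ n) ((step \<pi> p ^^ m) \<rho>0)) ((step \<pi> phat ^^ n) \<nu>)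
     (2 * real m * \<epsilon>\<pi> + 2 * (\<Sum>i<n. measure_pmf.expectation ((step \<pi> p ^^ i) \<nu>) (merr \<pi> p phat)))"
    by (rule tvc_trans[OF A B])
  hence "tvc ((step \<pi> p ^^ n) ((step \<pi> p ^^ m) \<rho>0)) ((step \<pi> phat ^^ n) \<nu>)
     (2 * real (t - k) * \<epsilon>\<pi> + 2 * real k * \<epsilon>m)"
    by (rule tvc_mono) (use sb in \<open>simp add: m_def\<close>)
  thus ?thesis unfolding eq1 eq2 .
qed

theorem theorem3:
  fixes \<rho>0 :: "('s::countable) pmf"
    and r :: "'s \<Rightarrow> ('a::countable) \<Rightarrow> real"
    and p phat :: "'s \<Rightarrow> 'a \<Rightarrow> 's pmf"
    and \<pi>D \<pi> :: "'s \<Rightarrow> 'a pmf"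
    and \<gamma> rmax \<epsilon>\<pi> \<epsilon>m :: real
    and k :: nat
  assumes "0 < \<gamma>" and "\<gamma> < 1"
    and "\<forall>s a. \<bar>r s a\<bar> \<le> rmax"
    and "\<forall>s. dTV (\<pi>D s) (\<pi> s) \<le> \<epsilon>\<pi>"
    and "\<forall>t i. t - k \<le> i \<and> i < t \<longrightarrow>
           measure_pmf.expectation (branch_state \<rho>0 k \<pi>D p \<pi> p t i)
             (\<lambda>s. measure_pmf.expectation (\<pi> s) (\<lambda>a. dTV (p s a) (phat s a))) \<le> \<epsilon>m"
  shows "return \<rho>0 \<gamma> r \<pi> p \<ge> branched_return \<rho>0 \<gamma> r k \<pi>D p \<pi> phat
           - 2 * rmax * (\<gamma> ^ (k + 1) * \<epsilon>\<pi> / (1 - \<gamma>)^2 + \<gamma> ^ k * \<epsilon>\<pi> / (1 - \<gamma>)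
                         + real k / (1 - \<gamma>) * \<epsilon>m)"
proof -
  note pol = assms(4) and mod = assms(5)
  have rmax0: "0 \<le> rmax" using assms(3) by (meson abs_ge_zero order_trans)
  have ep0: "0 \<le> \<epsilon>\<pi>" using pol dTV_nonneg by (meson order_trans)
  have g0: "0 \<le> \<gamma>" "\<gamma> < 1" using assms(1,2) by auto
  have em: "k = 0 \<or> 0 \<le> \<epsilon>m"
  proof (cases "k = 0")
    case False
    then have "1 - k \<le> (0::nat) \<and> (0::nat) < 1" by simp
    with mod have "measure_pmf.expectation (branch_state \<rho>0 k \<pi>D p \<pi> p 1 0)
             (\<lambda>s. measure_pmf.expectation (\<pi> s) (\<lambda>a. dTV (p s a) (phat s a))) \<le> \<epsilon>m" by blast
    moreover have "0 \<le> measure_pmf.expectation (branch_state \<rho>0 k \<pi>D p \<pi> p 1 0)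
             (\<lambda>s. measure_pmf.expectation (\<pi> s) (\<lambda>a. dTV (p s a) (phat s a)))"
      by (intro Bochner_Integration.integral_nonneg dTV_nonneg)
    ultimately show ?thesis by simp
  qed simp
  define K where "K = (\<lambda>s. map_pmf (\<lambda>a. (s, a)) (\<pi> s))"
  define T where "T t = measure_pmf.expectation (bind_pmf (state_law \<rho>0 \<pi> p t) K) (\<lambda>(s, a). r s a)" for t
  define Bt where "Bt t = measure_pmf.expectation (branch_sa \<rho>0 k \<pi>D p \<pi> phat t) (\<lambda>(s, a). r s a)" for t
  define c where "c t = 2 * real (t - k) * \<epsilon>\<pi> + 2 * real k * \<epsilon>m" for t
  have rb: "\<And>x. \<bar>case_prod r x\<bar> \<le> rmax" using assms(3) by (auto split: prod.splits)
  have diff: "Bt t - T t \<le> rmax * c t" for t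
  proof -
    have "tvc (bind_pmf (state_law \<rho>0 \<pi> p t) K) (bind_pmf (branch_state \<rho>0 k \<pi>D p \<pi> phat t t) K) (c t)"
      unfolding c_def by (rule tvc_bind_same[OF per_t[OF pol mod em]])
    from tvcD[OF this rb] show ?thesis
      unfolding T_def Bt_def branch_sa_def K_def by (simp add: abs_le_iff)
  qed
  have Tb: "\<bar>T t\<bar> \<le> rmax" for t unfolding T_def by (rule exp_abs_bound[OF rb])
  have Bb: "\<bar>Bt t\<bar> \<le> rmax" for t unfolding Bt_def by (rule exp_abs_bound[OF rb])
  have geo: "(\<lambda>t. \<gamma> ^ t) sums (1 / (1 - \<gamma>))" using g0 by (intro geometric_sums) simp
  have sg: "summable (\<lambda>t. rmax * \<gamma> ^ t)" by (rule summable_mult) (rule sums_summable[OF geo])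
  have sT: "summable (\<lambda>t. \<gamma> ^ t * T t)"
    by (rule summable_comparison_test[OF _ sg])
       (use Tb g0 in \<open>auto simp: abs_mult mult.commute intro!: mult_right_mono\<close>)
  have sB: "summable (\<lambda>t. \<gamma> ^ t * Bt t)"
    by (rule summable_comparison_test[OF _ sg])
       (use Bb g0 in \<open>auto simp: abs_mult mult.commute intro!: mult_right_mono\<close>)
  define D where "D = 2 * rmax * \<epsilon>\<pi> * (\<gamma> ^ (k + 1) / (1 - \<gamma>)^2) + 2 * rmax * real k * \<epsilon>m * (1 / (1 - \<gamma>))"
  have dsum: "(\<lambda>t. \<gamma> ^ t * (rmax * c t)) sums D"
  proof -
    have "(\<lambda>t. 2 * rmax * \<epsilon>\<pi> * (\<gamma> ^ t * real (t - k)) + 2 * rmax * real k * \<epsilon>m * \<gamma> ^ t) sums D"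
      unfolding D_def by (intro sums_add sums_mult sum_shift_geom geo g0)
    thus ?thesis by (simp add: c_def algebra_simps)
  qed
  have "suminf (\<lambda>t. \<gamma> ^ t * Bt t) - suminf (\<lambda>t. \<gamma> ^ t * T t) = suminf (\<lambda>t. \<gamma> ^ t * Bt t - \<gamma> ^ t * T t)"
    using suminf_diff[OF sB sT] by simp
  also have "\<dots> \<le> suminf (\<lambda>t. \<gamma> ^ t * (rmax * c t))"
  proof (rule suminf_le)
    fix t
    have "\<gamma> ^ t * (Bt t - T t) \<le> \<gamma> ^ t * (rmax * c t)"
      by (rule mult_left_mono[OF diff]) (use g0 in simp)
    thus "\<gamma> ^ t * Bt t - \<gamma> ^ t * T t \<le> \<gamma> ^ t * (rmax * c t)" by (simp add: algebra_simps)
  qed (use sB sT dsum in \<open>auto simp: sums_summable intro: summable_diff\<close>)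
  also have "\<dots> = D" using dsum by (simp add: sums_iff)
  also have "D \<le> 2 * rmax * (\<gamma> ^ (k + 1) * \<epsilon>\<pi> / (1 - \<gamma>)^2 + \<gamma> ^ k * \<epsilon>\<pi> / (1 - \<gamma>)
                         + real k / (1 - \<gamma>) * \<epsilon>m)"
  proof -
    have "0 \<le> 2 * rmax * (\<gamma> ^ k * \<epsilon>\<pi> / (1 - \<gamma>))"
      using rmax0 ep0 g0 by (intro mult_nonneg_nonneg divide_nonneg_nonneg) auto
    thus ?thesis unfolding D_def by (simp add: algebra_simps)
  qed
  finally have "suminf (\<lambda>t. \<gamma> ^ t * Bt t) - suminf (\<lambda>t. \<gamma> ^ t * T t) \<le> 2 * rmax * (\<gamma> ^ (k + 1) * \<epsilon>\<pi> / (1 - \<gamma>)^2 + \<gamma> ^ k * \<epsilon>\<pi> / (1 - \<gamma>)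
                         + real k / (1 - \<gamma>) * \<epsilon>m)" .
  moreover have "return \<rho>0 \<gamma> r \<pi> p = suminf (\<lambda>t. \<gamma> ^ t * T t)"
    unfolding return_def T_def K_def by simp
  moreover have "branched_return \<rho>0 \<gamma> r k \<pi>D p \<pi> phat = suminf (\<lambda>t. \<gamma> ^ t * Bt t)"
    unfolding branched_return_def Bt_def by simp
  ultimately show ?thesis by linarith
qed

end
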